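(* Let $Z=\operatorname{diag}(z_1,\dots,z_N)$ with distinct real $z_i$, and let $\bm w_1,\bm w_2,\bm v_1\in\mathbb{R}^N$ satisfy $\bm w_1^T\bm v_1=1$, $\bm w_2^T\bm v_1=0$, $\bm w_2^TZ\bm v_1=1$. Run the following recursion: $b_0=\bm w_1^TZ\bm v_1$; $\bm v_2=Z\bm v_1-b_0\bm v_1$; $b_1=\bm w_2^TZ\bm v_2$, $c_1=\bm w_1^TZ\bm v_2$; $\bm v_3=Z\bm v_2-b_1\bm v_2-c_1\bm v_1$; $\hat{\bm w}_3=Z\bm w_1-c_1\bm w_2-b_0\bm w_1$; $d_2=\bm w_1^TZ\bm v_3$, $\bm w_3=\hat{\bm w}_3/d_2$; then for $n=3,\dots,N-1$: $b_{n-1}=\bm w_n^TZ\bm v_n$, $c_{n-1}=\bm w_{n-1}^TZ\bm v_n$, $\bm v_{n+1}=Z\bm v_n-b_{n-1}\bm v_n-c_{n-1}\bm v_{n-1}-d_{n-1}\bm v_{n-2}$, $\hat{\bm w}_{n+1}=Z\bm w_{n-1}-c_{n-1}\bm w_n-b_{n-2}\bm w_{n-1}-\bm w_{n-2}$, $d_n=\bm w_{n-1}^TZ\bm v_{n+1}$, $\bm w_{n+1}=\hat{\bm w}_{n+1}/d_n$; finally $b_{N-1}=\bm w_N^TZ\bm v_N$, $c_{N-1}=\bm w_{N-1}^TZ\bm v_N$. Suppose no breakdown occurs, i.e. $d_n\neq0$ for all $n=2,\dots,N-1$. Then the following inverse eigenvalue problem has a unique solution: find $W,V,H\in\mathbb{R}^{N\times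 N}$ with $H$ banded upper Hessenberg of the form $H_{i,i}=b_{i-1}$, $H_{i+1,i}=1$, $H_{i,i+1}=c_i$, $H_{i,i+2}=d_{i+1}$ (all other entries zero), such that (D1) the first two columns of $W$ are $\bm w_1,\bm w_2$ and the first column of $V$ is $\bm v_1$; (D2) $W^TV=I_N$; (D3) $W^TZV=H$. Moreover this solution is $W=[\bm w_1,\dots,\bm w_N]$, $V=[\bm v_1,\dots,\bm v_N]$ and $H$ with the coefficients produced by the recursion. *)

theory Defs
  imports "Jordan_Normal_Form.Matrix"
begin

(* Z = diag(z_1,...,z_N), 0-based: entry (i,i) is z i *)
definition diagZ :: "nat \<Rightarrow> (nat \<Rightarrow> real) \<Rightarrow> real mat" where
  "diagZ N z = mat N N (\<lambda>(i,j). if i = j then z i else 0)"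

(* The recursion, 1-based: lanc Z w1 w2 v1 n = (v_n, w_n) for n >= 1. Index 0 is unused. *)
fun lanc :: "real mat \<Rightarrow> real vec \<Rightarrow> real vec \<Rightarrow> real vec \<Rightarrow> nat \<Rightarrow> real vec \<times> real vec" where
  "lanc Z w1 w2 v1 0 = (0\<^sub>v (dim_vec v1), 0\<^sub>v (dim_vec v1))"
| "lanc Z w1 w2 v1 (Suc 0) = (v1, w1)"
| "lanc Z w1 w2 v1 (Suc (Suc 0)) =
     (let b0 = w1 \<bullet> (Z *\<^sub>v v1) in (Z *\<^sub>v v1 - b0 \<cdot>\<^sub>v v1, w2))"
| "lanc Z w1 w2 v1 (Suc (Suc (Suc 0))) =
     (let v2 = fst (lanc Z w1 w2 v1 (Suc (Suc 0)));
          b0 = w1 \<bullet> (Z *\<^sub>v v1);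
          b1 = w2 \<bullet> (Z *\<^sub>v v2);
          c1 = w1 \<bullet> (Z *\<^sub>v v2);
          v3 = Z *\<^sub>v v2 - b1 \<cdot>\<^sub>v v2 - c1 \<cdot>\<^sub>v v1;
          wh3 = Z *\<^sub>v w1 - c1 \<cdot>\<^sub>v w2 - b0 \<cdot>\<^sub>v w1;
          d2 = w1 \<bullet> (Z *\<^sub>v v3)
      in (v3, (1 / d2) \<cdot>\<^sub>v wh3))"
| "lanc Z w1 w2 v1 (Suc (Suc (Suc (Suc k)))) =
     (let \<comment> \<open>n = k + 3; computes (v_{n+1}, w_{n+1})\<close>
          vn = fst (lanc Z w1 w2 v1 (Suc (Suc (Suc k))));
          wn = snd (lanc Z w1 w2 v1 (Suc (Suc (Suc k))));
          vn1 = fst (lanc Z w1 w2 v1 (Suc (Suc k)));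
          wn1 = snd (lanc Z w1 w2 v1 (Suc (Suc k)));
          vn2 = fst (lanc Z w1 w2 v1 (Suc k));
          wn2 = snd (lanc Z w1 w2 v1 (Suc k));
          b_n1 = wn \<bullet> (Z *\<^sub>v vn);
          c_n1 = wn1 \<bullet> (Z *\<^sub>v vn);
          d_n1 = wn2 \<bullet> (Z *\<^sub>v vn);
          b_n2 = wn1 \<bullet> (Z *\<^sub>v vn1);
          vnew = Z *\<^sub>v vn - b_n1 \<cdot>\<^sub>v vn - c_n1 \<cdot>\<^sub>v vn1 - d_n1 \<cdot>\<^sub>v vn2;
          what = Z *\<^sub>v wn1 - c_n1 \<cdot>\<^sub>v wn - b_n2 \<cdot>\<^sub>v wn1 - wn2;
          d_n = wn1 \<bullet> (Z *\<^sub>v vnew)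
      in (vnew, (1 / d_n) \<cdot>\<^sub>v what))"

definition lv :: "real mat \<Rightarrow> real vec \<Rightarrow> real vec \<Rightarrow> real vec \<Rightarrow> nat \<Rightarrow> real vec" where
  "lv Z w1 w2 v1 n = fst (lanc Z w1 w2 v1 n)"
definition lw :: "real mat \<Rightarrow> real vec \<Rightarrow> real vec \<Rightarrow> real vec \<Rightarrow> nat \<Rightarrow> real vec" where
  "lw Z w1 w2 v1 n = snd (lanc Z w1 w2 v1 n)"

definition lb :: "real mat \<Rightarrow> real vec \<Rightarrow> real vec \<Rightarrow> real vec \<Rightarrow> nat \<Rightarrow> real" where
  "lb Z w1 w2 v1 k = lw Z w1 w2 v1 (k+1) \<bullet> (Z *\<^sub>v lv Z w1 w2 v1 (k+1))"
definition lc :: "real mat \<Rightarrow> real vec \<Rightarrow> real vec \<Rightarrow> real vec \<Rightarrow> nat \<Rightarrow> real" where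
  "lc Z w1 w2 v1 k = lw Z w1 w2 v1 k \<bullet> (Z *\<^sub>v lv Z w1 w2 v1 (k+1))"
definition ld :: "real mat \<Rightarrow> real vec \<Rightarrow> real vec \<Rightarrow> real vec \<Rightarrow> nat \<Rightarrow> real" where
  "ld Z w1 w2 v1 k = lw Z w1 w2 v1 (k-1) \<bullet> (Z *\<^sub>v lv Z w1 w2 v1 (k+1))"

definition Wrec :: "nat \<Rightarrow> real mat \<Rightarrow> real vec \<Rightarrow> real vec \<Rightarrow> real vec \<Rightarrow> real mat" where
  "Wrec N Z w1 w2 v1 = mat N N (\<lambda>(i,j). lw Z w1 w2 v1 (j+1) $ i)"
definition Vrec :: "nat \<Rightarrow> real mat \<Rightarrow> real vec \<Rightarrow> real vec \<Rightarrow> real vec \<Rightarrow> real mat" where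
  "Vrec N Z w1 w2 v1 = mat N N (\<lambda>(i,j). lv Z w1 w2 v1 (j+1) $ i)"
(* 1-based H_{i,i}=b_{i-1}, H_{i+1,i}=1, H_{i,i+1}=c_i, H_{i,i+2}=d_{i+1}; in 0-based indices
   H(p,p)=b_p, H(p+1,p)=1, H(p,p+1)=c_{p+1}, H(p,p+2)=d_{p+2} *)
definition Hrec :: "nat \<Rightarrow> real mat \<Rightarrow> real vec \<Rightarrow> real vec \<Rightarrow> real vec \<Rightarrow> real mat" where
  "Hrec N Z w1 w2 v1 = mat N N (\<lambda>(i,j).
      if i = j then lb Z w1 w2 v1 i
      else if i = j + 1 then 1
      else if j = i + 1 then lc Z w1 w2 v1 j
      else if j = i + 2 then ld Z w1 w2 v1 j
      else 0)"

definition banded_hess :: "nat \<Rightarrow> real mat \<Rightarrow> bool" where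
  "banded_hess N H \<longleftrightarrow> H \<in> carrier_mat N N \<and>
     (\<forall>i<N. \<forall>j<N. (i = j + 1 \<longrightarrow> H $$ (i,j) = 1) \<and>
                   ((j + 1 < i \<or> i + 2 < j) \<longrightarrow> H $$ (i,j) = 0))"

definition iep_sol :: "nat \<Rightarrow> real mat \<Rightarrow> real vec \<Rightarrow> real vec \<Rightarrow> real vec
                       \<Rightarrow> real mat \<times> real mat \<times> real mat \<Rightarrow> bool" where
  "iep_sol N Z w1 w2 v1 S \<longleftrightarrow> (case S of (W, V, H) \<Rightarrow>
     W \<in> carrier_mat N N \<and> V \<in> carrier_mat N N \<and> banded_hess N H \<and>
     col W 0 = w1 \<and> col W 1 = w2 \<and> col V 0 = v1 \<and>
     W\<^sup>T * V = 1\<^sub>m N \<and>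
     W\<^sup>T * Z * V = H)"

end

theory Submission
  imports Defs "Jordan_Normal_Form.Determinant"
begin

lemma minus_zero_eq:
  fixes a b :: "real vec"
  assumes "a \<in> carrier_vec n" "b \<in> carrier_vec n" "a - b = 0\<^sub>v n"
  shows "a = b"
proof (rule eq_vecI)
  fix i assume i: "i < dim_vec b"
  have "(a - b) $ i = 0" using assms i by simp
  moreover have "(a - b) $ i = a $ i - b $ i" using i by simp
  ultimately show "a $ i = b $ i" by simp
qed (use assms in auto)

lemma crit:
  fixes A B :: "real mat"
  assumes A: "A \<in> carrier_mat n n" and B: "B \<in> carrier_mat n n" and AB: "transpose_mat A * B = 1\<^sub>m n"
    and u: "u \<in> carrier_vec n" and z: "\<forall>i<n. col A i \<bullet> u = 0"
  shows "u = 0\<^sub>v n"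
proof -
  have At: "transpose_mat A \<in> carrier_mat n n" using A by simp
  have BA: "B * transpose_mat A = 1\<^sub>m n" by (rule mat_mult_left_right_inverse[OF At B AB])
  have t: "transpose_mat A *\<^sub>v u = 0\<^sub>v n" using A z by (intro eq_vecI) auto
  have "u = 1\<^sub>m n *\<^sub>v u" using u by simp
  also have "\<dots> = (B * transpose_mat A) *\<^sub>v u" by (simp add: BA)
  also have "\<dots> = B *\<^sub>v (transpose_mat A *\<^sub>v u)" using B At u by (rule assoc_mult_mat_vec)
  also have "\<dots> = 0\<^sub>v n" unfolding t using carrier_matD[OF B] by (intro eq_vecI) (auto simp: scalar_prod_def)
  finally show ?thesis .
qed

context
  fixes N :: nat and Z :: "real mat" and w1 w2 v1 :: "real vec"
  assumes ZC: "Z \<in> carrier_mat N N"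
    and w1C: "w1 \<in> carrier_vec N" and w2C: "w2 \<in> carrier_vec N" and v1C: "v1 \<in> carrier_vec N"
begin

abbreviation "V \<equiv> lv Z w1 w2 v1"
abbreviation "W \<equiv> lw Z w1 w2 v1"
abbreviation "B \<equiv> lb Z w1 w2 v1"
abbreviation "C \<equiv> lc Z w1 w2 v1"
abbreviation "D \<equiv> ld Z w1 w2 v1"

lemma V0: "V 0 = 0\<^sub>v N"
  using carrier_vecD[OF v1C] by (simp add: lv_def)
lemma W0: "W 0 = 0\<^sub>v N"
  using carrier_vecD[OF v1C] by (simp add: lw_def)
lemma V1: "V 1 = v1" by (simp add: lv_def)
lemma W1: "W 1 = w1" by (simp add: lw_def)
lemma W2: "W 2 = w2" by (simp add: lw_def numeral_2_eq_2)

lemma V2: "V (Suc (Suc 0)) = Z *\<^sub>v V (Suc 0) - B 0 \<cdot>\<^sub>v V (Suc 0)"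
  by (simp only: lv_def lw_def lanc.simps Let_def fst_conv snd_conv lb_def add_0 One_nat_def)
lemma V3: "V (Suc (Suc (Suc 0))) = Z *\<^sub>v V (Suc (Suc 0)) - B (Suc 0) \<cdot>\<^sub>v V (Suc (Suc 0)) - C (Suc 0) \<cdot>\<^sub>v V (Suc 0)"
  by (simp only: lv_def lw_def lanc.simps Let_def fst_conv snd_conv lb_def lc_def add_0 One_nat_def add_Suc_right add_0_right)
lemma W3: "W (Suc (Suc (Suc 0))) = (1 / D (Suc (Suc 0))) \<cdot>\<^sub>v (Z *\<^sub>v W (Suc 0) - C (Suc 0) \<cdot>\<^sub>v W (Suc (Suc 0)) - B 0 \<cdot>\<^sub>v W (Suc 0))"
  by (simp only: lv_def lw_def lanc.simps Let_def fst_conv snd_conv lb_def lc_def ld_def add_0 One_nat_def add_Suc_right add_0_right diff_Suc_1 diff_Suc_Suc minus_nat.diff_0)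
lemma V4: "V (Suc (Suc (Suc (Suc m)))) = Z *\<^sub>v V (Suc (Suc (Suc m))) - B (Suc (Suc m)) \<cdot>\<^sub>v V (Suc (Suc (Suc m)))
   - C (Suc (Suc m)) \<cdot>\<^sub>v V (Suc (Suc m)) - D (Suc (Suc m)) \<cdot>\<^sub>v V (Suc m)"
  by (simp only: lv_def lw_def lanc.simps Let_def fst_conv snd_conv lb_def lc_def ld_def add_0 One_nat_def add_Suc_right add_0_right diff_Suc_1 diff_Suc_Suc minus_nat.diff_0)
lemma W4: "W (Suc (Suc (Suc (Suc m)))) = (1 / D (Suc (Suc (Suc m)))) \<cdot>\<^sub>v (Z *\<^sub>v W (Suc (Suc m)) - C (Suc (Suc m)) \<cdot>\<^sub>v W (Suc (Suc (Suc m)))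
   - B (Suc m) \<cdot>\<^sub>v W (Suc (Suc m)) - W (Suc m))"
  by (simp only: lv_def lw_def lanc.simps Let_def fst_conv snd_conv lb_def lc_def ld_def add_0 One_nat_def add_Suc_right add_0_right diff_Suc_1 diff_Suc_Suc minus_nat.diff_0)


lemmas [simp] = ZC w1C w2C v1C

lemma ZvC[simp]: "x \<in> carrier_vec N \<Longrightarrow> Z *\<^sub>v x \<in> carrier_vec N"
  using ZC by (rule mult_mat_vec_carrier)

lemma Z0[simp]: "Z *\<^sub>v 0\<^sub>v N = 0\<^sub>v N"
  using carrier_matD[OF ZC] by (intro eq_vecI) (auto simp: scalar_prod_def)

lemma V1'[simp]: "V (Suc 0) = v1" by (simp add: lv_def)
lemma W1'[simp]: "W (Suc 0) = w1" by (simp add: lw_def)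
lemma smult0[simp]: "c \<cdot>\<^sub>v 0\<^sub>v n = (0\<^sub>v n :: real vec)" by (intro eq_vecI) auto

lemma cases4: "n = 0 \<or> n = Suc 0 \<or> n = Suc (Suc 0) \<or> n = Suc (Suc (Suc 0)) \<or> (\<exists>m. n = Suc (Suc (Suc (Suc m))))"
  by presburger

lemma VWC: "V n \<in> carrier_vec N \<and> W n \<in> carrier_vec N"
proof (induction n rule: less_induct)
  case (less n)
  from cases4[of n] show ?case
  proof (elim disjE exE)
    assume "n = 0" then show ?thesis by (simp add: V0 W0)
  next
    assume "n = Suc 0" then show ?thesis using v1C w1C by (simp add: V1 W1)
  next
    assume n: "n = Suc (Suc 0)"
    have "W n = w2" using n W2 by (simp add: numeral_2_eq_2)
    then show ?thesis using v1C w2C ZC n by (simp add: V2 V1)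
  next
    assume n: "n = Suc (Suc (Suc 0))"
    have "V (Suc (Suc 0)) \<in> carrier_vec N" "W (Suc (Suc 0)) \<in> carrier_vec N"
      using less[of "Suc (Suc 0)"] n by auto
    then show ?thesis using v1C w1C ZC n by (simp add: V3 W3 V1 W1)
  next
    fix m assume n: "n = Suc (Suc (Suc (Suc m)))"
    have "V (Suc m) \<in> carrier_vec N" "W (Suc m) \<in> carrier_vec N"
         "V (Suc (Suc m)) \<in> carrier_vec N" "W (Suc (Suc m)) \<in> carrier_vec N"
         "V (Suc (Suc (Suc m))) \<in> carrier_vec N" "W (Suc (Suc (Suc m))) \<in> carrier_vec N"
      using less[of "Suc m"] less[of "Suc (Suc m)"] less[of "Suc (Suc (Suc m))"] n by auto
    then show ?thesis using ZC n by (simp add: V4 W4)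
  qed
qed

lemma VC[simp]: "V n \<in> carrier_vec N" using VWC by auto
lemma WC[simp]: "W n \<in> carrier_vec N" using VWC by auto

lemma V_rec:
  assumes "1 \<le> n"
  shows "V (n+1) = Z *\<^sub>v V n - B (n-1) \<cdot>\<^sub>v V n - C (n-1) \<cdot>\<^sub>v V (n-1) - D (n-1) \<cdot>\<^sub>v V (n-2)"
proof -
  from cases4[of n] assms show ?thesis
  proof (elim disjE exE)
    assume n: "n = Suc 0"
    have "Z *\<^sub>v V (Suc 0) - B 0 \<cdot>\<^sub>v V (Suc 0) \<in> carrier_vec N" using ZC by simp
    then show ?thesis using n V2 by (simp add: V0)
  next
    assume n: "n = Suc (Suc 0)"
    have "Z *\<^sub>v V (Suc (Suc 0)) - B (Suc 0) \<cdot>\<^sub>v V (Suc (Suc 0)) - C (Suc 0) \<cdot>\<^sub>v V (Suc 0) \<in> carrier_vec N" using ZC by simp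
    then show ?thesis using n V3 by (simp add: V0)
  next
    assume n: "n = Suc (Suc (Suc 0))"
    then show ?thesis using V4[of 0] by (simp add: numeral_3_eq_3)
  next
    fix m assume n: "n = Suc (Suc (Suc (Suc m)))"
    then show ?thesis using V4[of "Suc m"] by simp
  qed simp
qed

lemma W_rec:
  assumes "1 \<le> k"
  shows "W (k+2) = (1 / D (k+1)) \<cdot>\<^sub>v (Z *\<^sub>v W k - C k \<cdot>\<^sub>v W (k+1) - B (k-1) \<cdot>\<^sub>v W k - W (k-1))"
proof -
  from assms obtain m where k: "k = Suc m" by (cases k) auto
  show ?thesis
  proof (cases m)
    case 0
    have "Z *\<^sub>v W (Suc 0) - C (Suc 0) \<cdot>\<^sub>v W (Suc (Suc 0)) - B 0 \<cdot>\<^sub>v W (Suc 0) \<in> carrier_vec N" using ZC by simp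
    then show ?thesis using k 0 W3 by (simp add: W0 numeral_2_eq_2)
  next
    case (Suc p)
    then show ?thesis using k W4[of p] by (simp add: numeral_2_eq_2)
  qed
qed


lemmas dots = scalar_prod_minus_distrib[where n=N] minus_scalar_prod_distrib[where n=N]
  scalar_prod_smult_distrib[where n=N] smult_scalar_prod_distrib[where n=N]

lemma B_eq: "B k = W (k+1) \<bullet> (Z *\<^sub>v V (k+1))" by (simp add: lb_def)
lemma C_eq: "C k = W k \<bullet> (Z *\<^sub>v V (k+1))" by (simp add: lc_def)
lemma D_eq: "D k = W (k-1) \<bullet> (Z *\<^sub>v V (k+1))" by (simp add: ld_def)

lemma V_dot:
  assumes "1 \<le> n" "x \<in> carrier_vec N"
  shows "x \<bullet> V (n+1) = x \<bullet> (Z *\<^sub>v V n) - B (n-1) * (x \<bullet> V n) - C (n-1) * (x \<bullet> V (n-1)) - D (n-1) * (x \<bullet> V (n-2))"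
  unfolding V_rec[OF assms(1)] using assms by (simp add: scalar_prod_minus_distrib[of x N])

lemma W_dot:
  assumes "1 \<le> k" "D (k+1) \<noteq> 0" "u \<in> carrier_vec N"
  shows "D (k+1) * (W (k+2) \<bullet> u) = (Z *\<^sub>v W k) \<bullet> u - C k * (W (k+1) \<bullet> u) - B (k-1) * (W k \<bullet> u) - W (k-1) \<bullet> u"
  unfolding W_rec[OF assms(1)] using assms by (simp add: minus_scalar_prod_distrib[of _ N])


context
  assumes ZS: "\<And>a b. a \<in> carrier_vec N \<Longrightarrow> b \<in> carrier_vec N \<Longrightarrow> (Z *\<^sub>v a) \<bullet> b = a \<bullet> (Z *\<^sub>v b)"
    and h11: "w1 \<bullet> v1 = 1" and h21: "w2 \<bullet> v1 = 0" and h2Z1: "w2 \<bullet> (Z *\<^sub>v v1) = 1"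
    and dnz: "\<forall>n\<in>{2..N-1}. D n \<noteq> 0"
begin

lemma dnz': "2 \<le> n \<Longrightarrow> n + 1 \<le> N \<Longrightarrow> D n \<noteq> 0" using dnz by auto

lemma base2: "\<forall>i\<le>2. \<forall>j\<le>2. W i \<bullet> V j = (if i = j \<and> 0 < i then 1 else 0)"
proof -
  have V2': "V 2 = Z *\<^sub>v v1 - B 0 \<cdot>\<^sub>v v1" using V2 by (simp add: numeral_2_eq_2)
  have B0: "B 0 = w1 \<bullet> (Z *\<^sub>v v1)" by (simp add: B_eq)
  have a: "W 1 \<bullet> V 2 = 0" unfolding V2' W1 B0 by (simp add: dots h11)
  have b: "W 2 \<bullet> V 2 = 1" unfolding V2' W2 by (simp add: dots h21 h2Z1)
  have c: "W 2 \<bullet> V 1 = 0" "W 1 \<bullet> V 1 = 1" using h21 h11 by (simp_all add: W2 W1 V1)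
  have i3: "\<And>i::nat. i \<le> 2 \<Longrightarrow> i = 0 \<or> i = 1 \<or> i = 2" by auto
  show ?thesis
  proof (intro allI impI)
    fix i j :: nat assume "i \<le> 2" "j \<le> 2"
    then show "W i \<bullet> V j = (if i = j \<and> 0 < i then 1 else 0)"
      using i3[OF \<open>i \<le> 2\<close>] i3[OF \<open>j \<le> 2\<close>] a b c by - (elim disjE, simp_all add: W0 V0)
  qed
qed


lemma bstep:
  assumes n2: "2 \<le> n" and nN: "n + 1 \<le> N"
    and IH: "\<forall>i\<le>n. \<forall>j\<le>n. W i \<bullet> V j = (if i = j \<and> 0 < i then 1 else 0)"
  shows "\<forall>i\<le>n+1. \<forall>j\<le>n+1. W i \<bullet> V j = (if i = j \<and> 0 < i then 1 else 0)"
proof -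
  have I: "\<And>i j. i \<le> n \<Longrightarrow> j \<le> n \<Longrightarrow> W i \<bullet> V j = (if i = j \<and> 0 < i then 1 else 0)"
    using IH by auto
  have ne: "n \<noteq> n-1" "n-1 \<noteq> n" "n \<noteq> n-2" "n-2 \<noteq> n" "n-1 \<noteq> n-2" "n-2 \<noteq> n-1" "n - Suc 0 \<noteq> n" "n \<noteq> n - Suc 0"
    "n - 2 \<noteq> n - Suc 0" "n - Suc 0 \<noteq> n - 2" "0 < n - 1" "0 < n" "0 < n - Suc 0"
    using n2 by auto
  have A: "W i \<bullet> V (n+1) = 0" if "i \<le> n" for i
  proof -
    have e: "W i \<bullet> V (n+1) = W i \<bullet> (Z *\<^sub>v V n) - B (n-1) * (W i \<bullet> V n) - C (n-1) * (W i \<bullet> V (n-1)) - D (n-1) * (W i \<bullet> V (n-2))"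
      using V_dot[of n "W i"] n2 ne by simp
    have "i = 0 \<or> i = n \<or> (i = n-1 \<and> 0<i) \<or> (i = n-2 \<and> 0 < i) \<or> (0 < i \<and> i + 3 \<le> n)" using that by presburger
    then consider "i = 0" | "i = n" | "i = n-1" "0<i" | "i = n-2" "0 < i" | "0 < i" "i + 3 \<le> n" by blast
    then show ?thesis
    proof cases
      case 1 then show ?thesis by (simp add: W0)
    next
      case 2
      have "B (n-1) = W n \<bullet> (Z *\<^sub>v V n)" using B_eq[of "n-1"] n2 ne by simp
      then show ?thesis using e 2 I[of n n] I[of n "n-1"] I[of n "n-2"] n2 ne by simp
    next
      case 3
      have "C (n-1) = W (n-1) \<bullet> (Z *\<^sub>v V n)" using C_eq[of "n-1"] n2 ne by simp
      then show ?thesis using e 3 I[of "n-1" n] I[of "n-1" "n-1"] I[of "n-1" "n-2"] n2 ne by simp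
    next
      case 4
      have "D (n-1) = W (n-2) \<bullet> (Z *\<^sub>v V n)" using D_eq[of "n-1"] n2 by (simp add: numeral_2_eq_2)
      then show ?thesis using e 4 I[of "n-2" n] I[of "n-2" "n-1"] I[of "n-2" "n-2"] n2 ne by simp
    next
      case 5
      have d: "D (i+1) \<noteq> 0" using dnz'[of "i+1"] nN 5 by simp
      have w: "D (i+1) * (W (i+2) \<bullet> V n) = (Z *\<^sub>v W i) \<bullet> V n - C i * (W (i+1) \<bullet> V n) - B (i-1) * (W i \<bullet> V n) - W (i-1) \<bullet> V n"
        using W_dot[of i "V n"] d 5 by simp
      have "W i \<bullet> (Z *\<^sub>v V n) = 0"
        using w ZS[of "W i" "V n"] I[of "i+2" n] I[of "i+1" n] I[of i n] I[of "i-1" n] 5 by simp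
      moreover have "i \<noteq> n-1" "i \<noteq> n-2" "i \<noteq> n" "i \<noteq> n - Suc 0" using 5 by auto
      ultimately show ?thesis using e I[of i n] I[of i "n-1"] I[of i "n-2"] 5 by simp
    qed
  qed
  have dn: "D n \<noteq> 0" using dnz'[OF n2] nN by simp
  have Bp: "W (n+1) \<bullet> V j = 0" if "j \<le> n" for j
  proof -
    have w: "D n * (W (n+1) \<bullet> V j) = (Z *\<^sub>v W (n-1)) \<bullet> V j - C (n-1) * (W n \<bullet> V j) - B (n-2) * (W (n-1) \<bullet> V j) - W (n-2) \<bullet> V j"
      using W_dot[of "n-1" "V j"] dn n2 by (simp add: numeral_2_eq_2)
    have z: "(Z *\<^sub>v W (n-1)) \<bullet> V j = W (n-1) \<bullet> (Z *\<^sub>v V j)" by (rule ZS) auto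
    have "W (n-1) \<bullet> (Z *\<^sub>v V j) - C (n-1) * (W n \<bullet> V j) - B (n-2) * (W (n-1) \<bullet> V j) - W (n-2) \<bullet> V j = 0"
    proof -
      have "j = 0 \<or> j = n \<or> j = n-1 \<or> (j = n-2 \<and> 0<j) \<or> (0 < j \<and> j + 3 \<le> n)" using that by presburger
      then consider "j = 0" | "j = n" | "j = n-1" | "j = n-2" "0<j" | "0 < j" "j + 3 \<le> n" by blast
      then show ?thesis
      proof cases
        case 1 then show ?thesis by (simp add: V0)
      next
        case 2
        have "C (n-1) = W (n-1) \<bullet> (Z *\<^sub>v V n)" using C_eq[of "n-1"] n2 ne by simp
        then show ?thesis using 2 I[of n n] I[of "n-1" n] I[of "n-2" n] n2 ne by simp
      next
        case 3
        have "B (n-2) = W (n-1) \<bullet> (Z *\<^sub>v V (n-1))" using B_eq[of "n-2"] n2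
          by (metis Nat.add_diff_assoc2 Suc_1 Suc_eq_plus1 diff_Suc_Suc one_le_numeral)
        then show ?thesis using 3 I[of n "n-1"] I[of "n-1" "n-1"] I[of "n-2" "n-1"] n2 ne by simp
      next
        case 4
        obtain m where m: "n = m + 2" "j = m" "1 \<le> m" using 4 n2 by (metis add_diff_inverse_nat less_one not_less order_less_irrefl add.commute le_add_diff_inverse2 Suc_leI)
        have v: "W (m+1) \<bullet> V (m+1) = W (m+1) \<bullet> (Z *\<^sub>v V m) - B (m-1) * (W (m+1) \<bullet> V m)
            - C (m-1) * (W (m+1) \<bullet> V (m-1)) - D (m-1) * (W (m+1) \<bullet> V (m-2))"
          using V_dot[of m "W (m+1)"] m(3) by simp
        have i1: "W (m+1) \<bullet> V (m+1) = 1" using I[of "m+1" "m+1"] m by simp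
        have i2: "W (m+1) \<bullet> V m = 0" using I[of "m+1" "m"] m by simp
        have i3: "W (m+1) \<bullet> V (m-1) = 0" using I[of "m+1" "m-1"] m by simp
        have i4: "W (m+1) \<bullet> V (m-2) = 0" using I[of "m+1" "m-2"] m by simp
        have x: "W (m+1) \<bullet> (Z *\<^sub>v V m) = 1" using v unfolding i1 i2 i3 i4 by simp
        have i5: "W (m+2) \<bullet> V m = 0" using I[of "m+2" "m"] m by simp
        have i6: "W m \<bullet> V m = 1" using I[of "m" "m"] m by simp
        have "n - 1 = m + 1" "n - 2 = m" using m by auto
        then show ?thesis using x i2 i5 i6 m by simp
      next
        case 5
        have v: "W (n-1) \<bullet> V (j+1) = W (n-1) \<bullet> (Z *\<^sub>v V j) - B (j-1) * (W (n-1) \<bullet> V j)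
            - C (j-1) * (W (n-1) \<bullet> V (j-1)) - D (j-1) * (W (n-1) \<bullet> V (j-2))"
          using V_dot[of j "W (n-1)"] 5 by simp
        have i1: "W (n-1) \<bullet> V (j+1) = 0" using I[of "n-1" "j+1"] 5 by simp
        have i2: "W (n-1) \<bullet> V j = 0" using I[of "n-1" "j"] 5 by simp
        have i3: "W (n-1) \<bullet> V (j-1) = 0" using I[of "n-1" "j-1"] 5 by simp
        have i4: "W (n-1) \<bullet> V (j-2) = 0" using I[of "n-1" "j-2"] 5 by simp
        have x: "W (n-1) \<bullet> (Z *\<^sub>v V j) = 0" using v unfolding i1 i2 i3 i4 by simp
        have i5: "W n \<bullet> V j = 0" using I[of n j] 5 by simp
        have i6: "W (n-2) \<bullet> V j = 0" using I[of "n-2" j] 5 by simp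
        show ?thesis unfolding x i2 i5 i6 by simp
      qed
    qed
    then have "D n * (W (n+1) \<bullet> V j) = 0" using w z by simp
    then show ?thesis using dn by simp
  qed
  have Cp: "W (n+1) \<bullet> V (n+1) = 1"
  proof -
    have w: "D n * (W (n+1) \<bullet> V (n+1)) = (Z *\<^sub>v W (n-1)) \<bullet> V (n+1) - C (n-1) * (W n \<bullet> V (n+1)) - B (n-2) * (W (n-1) \<bullet> V (n+1)) - W (n-2) \<bullet> V (n+1)"
      using W_dot[of "n-1" "V (n+1)"] dn n2 by (simp add: numeral_2_eq_2)
    have z: "(Z *\<^sub>v W (n-1)) \<bullet> V (n+1) = W (n-1) \<bullet> (Z *\<^sub>v V (n+1))" by (rule ZS) auto
    have dd: "D n = W (n-1) \<bullet> (Z *\<^sub>v V (n+1))" by (rule D_eq)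
    have a1: "W n \<bullet> V (n+1) = 0" "W (n-1) \<bullet> V (n+1) = 0" "W (n-2) \<bullet> V (n+1) = 0"
      using A[of n] A[of "n-1"] A[of "n-2"] by auto
    have "D n * (W (n+1) \<bullet> V (n+1)) = D n * 1"
      using w unfolding z a1 dd[symmetric] by simp
    then show ?thesis using dn by simp
  qed
  show ?thesis
  proof (intro allI impI)
    fix i j assume ij: "i \<le> n + 1" "j \<le> n + 1"
    show "W i \<bullet> V j = (if i = j \<and> 0 < i then 1 else 0)"
    proof (cases "i = n+1")
      case True
      then show ?thesis using Cp Bp[of j] ij by (cases "j = n+1") auto
    next
      case False
      then show ?thesis using A[of i] I[of i j] ij by (cases "j = n+1") auto
    qed
  qed
qed

lemma biorth:
  assumes "2 \<le> n" "n \<le> N"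
  shows "\<forall>i\<le>n. \<forall>j\<le>n. W i \<bullet> V j = (if i = j \<and> 0 < i then 1 else 0)"
  using assms
proof (induction n rule: nat_induct_at_least)
  case base then show ?case using base2 by blast
next
  case (Suc n)
  have n2: "2 \<le> n" and nN: "n + 1 \<le> N" using Suc by auto
  have "n \<le> N" using nN by simp
  then have IH: "\<forall>i\<le>n. \<forall>j\<le>n. W i \<bullet> V j = (if i = j \<and> 0 < i then 1 else 0)" using Suc.IH by blast
  show ?case using bstep[OF n2 nN IH] by (simp only: Suc_eq_plus1)
qed


context
  assumes N3: "3 \<le> N"
begin

lemma BN: "i \<le> N \<Longrightarrow> j \<le> N \<Longrightarrow> W i \<bullet> V j = (if i = j \<and> 0 < i then 1 else 0)"
  using biorth[of N] N3 by auto

lemma ent_sub: assumes "j + 1 < N" shows "W (j+2) \<bullet> (Z *\<^sub>v V (j+1)) = 1"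
proof -
  have v: "W (j+2) \<bullet> V (j+1+1) = W (j+2) \<bullet> (Z *\<^sub>v V (j+1)) - B (j+1-1) * (W (j+2) \<bullet> V (j+1))
     - C (j+1-1) * (W (j+2) \<bullet> V (j+1-1)) - D (j+1-1) * (W (j+2) \<bullet> V (j+1-2))"
    by (rule V_dot) auto
  have e: "j+1+1 = j+2" "j+1-1 = j" by auto
  have i: "W (j+2) \<bullet> V (j+2) = 1" "W (j+2) \<bullet> V (j+1) = 0" "W (j+2) \<bullet> V j = 0" "W (j+2) \<bullet> V (j+1-2) = 0"
    using BN[of "j+2" "j+2"] BN[of "j+2" "j+1"] BN[of "j+2" "j"] BN[of "j+2" "j+1-2"] assms by auto
  show ?thesis using v unfolding e i by simp
qed

lemma ent_low: assumes "j + 1 < i" "i < N" shows "W (i+1) \<bullet> (Z *\<^sub>v V (j+1)) = 0"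
proof -
  have v: "W (i+1) \<bullet> V (j+1+1) = W (i+1) \<bullet> (Z *\<^sub>v V (j+1)) - B (j+1-1) * (W (i+1) \<bullet> V (j+1))
     - C (j+1-1) * (W (i+1) \<bullet> V (j+1-1)) - D (j+1-1) * (W (i+1) \<bullet> V (j+1-2))"
    by (rule V_dot) auto
  have i: "W (i+1) \<bullet> V (j+1+1) = 0" "W (i+1) \<bullet> V (j+1) = 0" "W (i+1) \<bullet> V (j+1-1) = 0" "W (i+1) \<bullet> V (j+1-2) = 0"
    using BN[of "i+1" "j+1+1"] BN[of "i+1" "j+1"] BN[of "i+1" "j+1-1"] BN[of "i+1" "j+1-2"] assms by auto
  show ?thesis using v unfolding i by simp
qed

lemma ent_high: assumes "i + 2 < j" "j < N" shows "W (i+1) \<bullet> (Z *\<^sub>v V (j+1)) = 0"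
proof -
  have d: "D (i+1+1) \<noteq> 0" using dnz'[of "i+2"] assms by simp
  have w: "D (i+1+1) * (W (i+1+2) \<bullet> V (j+1)) = (Z *\<^sub>v W (i+1)) \<bullet> V (j+1) - C (i+1) * (W (i+1+1) \<bullet> V (j+1))
     - B (i+1-1) * (W (i+1) \<bullet> V (j+1)) - W (i+1-1) \<bullet> V (j+1)"
    by (rule W_dot) (use d in auto)
  have i: "W (i+1+2) \<bullet> V (j+1) = 0" "W (i+1+1) \<bullet> V (j+1) = 0" "W (i+1) \<bullet> V (j+1) = 0" "W (i+1-1) \<bullet> V (j+1) = 0"
    using BN[of "i+1+2" "j+1"] BN[of "i+1+1" "j+1"] BN[of "i+1" "j+1"] BN[of "i+1-1" "j+1"] assms by auto
  have "(Z *\<^sub>v W (i+1)) \<bullet> V (j+1) = 0" using w unfolding i by simp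
  then show ?thesis using ZS[of "W (i+1)" "V (j+1)"] by simp
qed

abbreviation "Wm \<equiv> Wrec N Z w1 w2 v1"
abbreviation "Vm \<equiv> Vrec N Z w1 w2 v1"
abbreviation "Hm \<equiv> Hrec N Z w1 w2 v1"

lemma WmC[simp]: "Wm \<in> carrier_mat N N" by (simp add: Wrec_def)
lemma VmC[simp]: "Vm \<in> carrier_mat N N" by (simp add: Vrec_def)
lemma HmC[simp]: "Hm \<in> carrier_mat N N" by (simp add: Hrec_def)

lemma colWm: "j < N \<Longrightarrow> col Wm j = W (j+1)"
  unfolding Wrec_def by (intro eq_vecI) (auto simp: carrier_vecD[OF WC])
lemma colVm: "j < N \<Longrightarrow> col Vm j = V (j+1)"
  unfolding Vrec_def by (intro eq_vecI) (auto simp: carrier_vecD[OF VC])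

lemma WtV: "transpose_mat Wm * Vm = 1\<^sub>m N"
proof (rule eq_matI)
  fix i j assume ij: "i < dim_row (1\<^sub>m N)" "j < dim_col (1\<^sub>m N)"
  then have "(transpose_mat Wm * Vm) $$ (i, j) = col Wm i \<bullet> col Vm j"
    by (simp add: Wrec_def Vrec_def)
  also have "\<dots> = W (i+1) \<bullet> V (j+1)" using ij by (simp add: colWm colVm)
  also have "\<dots> = 1\<^sub>m N $$ (i, j)" using BN[of "i+1" "j+1"] ij by simp
  finally show "(transpose_mat Wm * Vm) $$ (i, j) = 1\<^sub>m N $$ (i, j)" .
qed (auto simp: Wrec_def Vrec_def)

lemma WtZV: "transpose_mat Wm * Z * Vm = Hm"
proof -
  have "transpose_mat Wm * Z * Vm = transpose_mat Wm * (Z * Vm)"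
    by (rule assoc_mult_mat[of _ N N _ N _ N]) auto
  also have "\<dots> = Hm"
  proof (rule eq_matI)
    fix i j assume ij: "i < dim_row Hm" "j < dim_col Hm"
    then have ij': "i < N" "j < N" by (auto simp: Hrec_def)
    have "(transpose_mat Wm * (Z * Vm)) $$ (i, j) = col Wm i \<bullet> col (Z * Vm) j"
      using ij' ZC by (simp add: Wrec_def Vrec_def)
    also have "\<dots> = W (i+1) \<bullet> (Z *\<^sub>v V (j+1))" using ij' ZC by (simp add: colWm colVm col_mult2[OF ZC VmC ij'(2)])
    also have "\<dots> = Hm $$ (i, j)"
    proof -
      have H: "Hm $$ (i, j) = (if i = j then B i else if i = j + 1 then 1 else if j = i + 1 then C j
          else if j = i + 2 then D j else 0)" using ij' by (simp add: Hrec_def)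
      consider "i = j" | "i = j + 1" | "j = i + 1" | "j = i + 2" | "j + 1 < i" | "i + 2 < j" by linarith
      then show ?thesis
      proof cases
        case 1 then show ?thesis unfolding H by (simp add: B_eq)
      next
        case 2 then show ?thesis unfolding H using ent_sub[of j] ij' by (simp add: numeral_2_eq_2)
      next
        case 3 then show ?thesis unfolding H by (simp add: C_eq)
      next
        case 4 then show ?thesis unfolding H by (simp add: D_eq)
      next
        case 5 then show ?thesis unfolding H using ent_low[of j i] ij' by simp
      next
        case 6 then show ?thesis unfolding H using ent_high[of i j] ij' by simp
      qed
    qed
    finally show "(transpose_mat Wm * (Z * Vm)) $$ (i, j) = Hm $$ (i, j)" .
  qed (use ZC in \<open>auto simp: Wrec_def Vrec_def Hrec_def\<close>)
  finally show ?thesis .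
qed

lemma Hm_band: "banded_hess N Hm"
  unfolding banded_hess_def by (auto simp: Hrec_def)

lemma rec_sol: "iep_sol N Z w1 w2 v1 (Wm, Vm, Hm)"
  unfolding iep_sol_def using WtV WtZV Hm_band N3 colWm[of 0] colWm[of 1] colVm[of 0]
  using W2 by (auto simp: W1 V1 numeral_2_eq_2)


context
  fixes X Y H :: "real mat"
  assumes XC: "X \<in> carrier_mat N N" and YC: "Y \<in> carrier_mat N N"
    and XY1: "transpose_mat X * Y = 1\<^sub>m N" and XZY: "transpose_mat X * Z * Y = H"
    and HB: "banded_hess N H" and X0: "col X 0 = w1" and X1: "col X 1 = w2" and Y0: "col Y 0 = v1"
begin

lemma colXC[simp]: "col X i \<in> carrier_vec N" using XC by (auto simp: col_def)
lemma colYC[simp]: "col Y i \<in> carrier_vec N" using YC by (auto simp: col_def)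

lemma XYd: "i < N \<Longrightarrow> j < N \<Longrightarrow> col X i \<bullet> col Y j = (if i = j then 1 else 0)"
proof -
  assume ij: "i < N" "j < N"
  have "(transpose_mat X * Y) $$ (i,j) = col X i \<bullet> col Y j" using XC YC ij by simp
  then show ?thesis using XY1 ij by simp
qed

lemma XZYd: "i < N \<Longrightarrow> j < N \<Longrightarrow> col X i \<bullet> (Z *\<^sub>v col Y j) = H $$ (i,j)"
proof -
  assume ij: "i < N" "j < N"
  have "transpose_mat X * Z * Y = transpose_mat X * (Z * Y)"
    by (rule assoc_mult_mat[of _ N N _ N _ N]) (use XC YC in auto)
  then have "H $$ (i,j) = (transpose_mat X * (Z * Y)) $$ (i,j)" using XZY by simp
  also have "\<dots> = col X i \<bullet> col (Z * Y) j" using XC YC ZC ij by simp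
  also have "\<dots> = col X i \<bullet> (Z *\<^sub>v col Y j)" using col_mult2[OF ZC YC ij(2)] by simp
  finally show ?thesis by simp
qed

lemma Hsub: "i < N \<Longrightarrow> j < N \<Longrightarrow> i = j + 1 \<Longrightarrow> H $$ (i,j) = 1"
  using HB unfolding banded_hess_def by auto
lemma Hzero: "i < N \<Longrightarrow> j < N \<Longrightarrow> j + 1 < i \<or> i + 2 < j \<Longrightarrow> H $$ (i,j) = 0"
  using HB unfolding banded_hess_def by auto

lemma YX1: "transpose_mat Y * X = 1\<^sub>m N"
proof -
  have "transpose_mat (transpose_mat X * Y) = transpose_mat Y * X"
    using transpose_mult[of "transpose_mat X" N N Y N] XC YC by simp
  then show ?thesis using XY1 by simp
qed

lemma ystep:
  assumes nN: "n + 1 < N" and eq: "\<forall>k\<le>n. col X k = W (k+1) \<and> col Y k = V (k+1)"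
  shows "col Y (n+1) = V (n+2)"
proof -
  have XV: "col X i \<bullet> V k = (if k = i + 1 then 1 else 0)" if "i < N" "k \<le> n + 1" for i k
  proof (cases k)
    case 0 then show ?thesis by (simp add: V0)
  next
    case (Suc k')
    then have "V k = col Y k'" using eq that by auto
    then show ?thesis using XYd[of i k'] that Suc nN by auto
  qed
  have "col Y (n+1) - V (n+2) = 0\<^sub>v N"
  proof (rule crit[OF XC YC XY1], simp, intro allI impI)
    fix i assume i: "i < N"
    have e1: "col X i \<bullet> (col Y (n+1) - V (n+2)) = col X i \<bullet> col Y (n+1) - col X i \<bullet> V (n+2)"
      by (rule scalar_prod_minus_distrib[of _ N]) auto
    have v: "col X i \<bullet> V (n+1+1) = col X i \<bullet> (Z *\<^sub>v V (n+1)) - B (n+1-1) * (col X i \<bullet> V (n+1))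
      - C (n+1-1) * (col X i \<bullet> V (n+1-1)) - D (n+1-1) * (col X i \<bullet> V (n+1-2))"
      by (rule V_dot) auto
    have e2: "n+1+1 = n+2" "n+1-1 = n" by auto
    have d1: "col X i \<bullet> V (n+1) = (if n = i then 1 else 0)" using XV[OF i, of "n+1"] by auto
    have d2: "col X i \<bullet> V n = (if n = i + 1 then 1 else 0)" using XV[OF i, of "n"] by auto
    have d3: "col X i \<bullet> V (n+1-2) = (if n = i + 2 then 1 else 0)" using XV[OF i, of "n+1-2"] by auto
    have yy: "col X i \<bullet> col Y (n+1) = (if i = n+1 then 1 else 0)" using XYd[OF i, of "n+1"] nN by auto
    have zz: "col X i \<bullet> (Z *\<^sub>v V (n+1)) = H $$ (i, n)" using XZYd[OF i, of n] eq nN by auto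
    have "col X i \<bullet> col Y (n+1) = col X i \<bullet> V (n+2)"
    proof -
      consider "i = n + 1" | "n + 1 < i" | "i = n" | "i + 1 = n" | "i + 2 = n" | "i + 2 < n" by linarith
      then show ?thesis
      proof cases
        case 1 then show ?thesis using v unfolding e2 d1 d2 d3 yy zz using Hsub[OF i, of n] nN by simp
      next
        case 2 then show ?thesis using v unfolding e2 d1 d2 d3 yy zz using Hzero[OF i, of n] nN by simp
      next
        case 3
        have "col X i \<bullet> (Z *\<^sub>v V (n+1)) = B n" using eq 3 by (simp add: B_eq)
        then show ?thesis using v 3 unfolding e2 d1 d2 d3 yy by simp
      next
        case 4
        have "col X i \<bullet> (Z *\<^sub>v V (n+1)) = C n" using eq 4 by (auto simp: C_eq)
        then show ?thesis using v 4 unfolding e2 d1 d2 d3 yy by simp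
      next
        case 5
        have "col X i \<bullet> (Z *\<^sub>v V (n+1)) = D n" using eq 5 by (auto simp: D_eq)
        then show ?thesis using v 5 unfolding e2 d1 d2 d3 yy by simp
      next
        case 6 then show ?thesis using v unfolding e2 d1 d2 d3 yy zz using Hzero[OF i, of n] nN by simp
      qed
    qed
    then show "col X i \<bullet> (col Y (n+1) - V (n+2)) = 0" unfolding e1 by simp
  qed
  then show ?thesis
    using minus_zero_eq[where n=N, of "col Y (n+1)" "V (n+2)"] by simp
qed


lemma xstep:
  assumes n1: "1 \<le> n" and nN: "n + 1 < N" and eqX: "\<forall>k\<le>n. col X k = W (k+1)"
    and eqY: "\<forall>k\<le>n+1. col Y k = V (k+1)"
  shows "col X (n+1) = W (n+2)"
proof -
  have WY: "W k \<bullet> col Y j = (if k = j + 1 then 1 else 0)" if "j < N" "k \<le> n + 1" for j k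
  proof (cases k)
    case 0 then show ?thesis by (simp add: W0)
  next
    case (Suc k')
    then have "W k = col X k'" using eqX that by auto
    then show ?thesis using XYd[of k' j] that Suc nN by auto
  qed
  have dn: "D (n+1) \<noteq> 0" using dnz'[of "n+1"] n1 nN by simp
  have "col X (n+1) - W (n+2) = 0\<^sub>v N"
  proof (rule crit[OF YC XC YX1], simp, intro allI impI)
    fix j assume j: "j < N"
    have e1: "col Y j \<bullet> (col X (n+1) - W (n+2)) = col Y j \<bullet> col X (n+1) - col Y j \<bullet> W (n+2)"
      by (rule scalar_prod_minus_distrib[of _ N]) auto
    have c1: "col Y j \<bullet> col X (n+1) = col X (n+1) \<bullet> col Y j" by (rule comm_scalar_prod[of _ N]) auto
    have c2: "col Y j \<bullet> W (n+2) = W (n+2) \<bullet> col Y j" by (rule comm_scalar_prod[of _ N]) auto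
    have w: "D (n+1) * (W (n+2) \<bullet> col Y j) = (Z *\<^sub>v W n) \<bullet> col Y j - C n * (W (n+1) \<bullet> col Y j)
       - B (n-1) * (W n \<bullet> col Y j) - W (n-1) \<bullet> col Y j"
      by (rule W_dot) (use n1 dn in auto)
    have z: "(Z *\<^sub>v W n) \<bullet> col Y j = W n \<bullet> (Z *\<^sub>v col Y j)" by (rule ZS) auto
    have d1: "W (n+1) \<bullet> col Y j = (if n = j then 1 else 0)" using WY[OF j, of "n+1"] by auto
    have d2: "W n \<bullet> col Y j = (if n = j + 1 then 1 else 0)" using WY[OF j, of "n"] by auto
    have d3: "W (n-1) \<bullet> col Y j = (if n = j + 2 then 1 else 0)" using WY[OF j, of "n-1"] n1 by auto
    have xx: "col X (n+1) \<bullet> col Y j = (if j = n+1 then 1 else 0)" using XYd[of "n+1" j] j nN by auto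
    have hh: "W n \<bullet> (Z *\<^sub>v col Y j) = H $$ (n-1, j)" using XZYd[of "n-1" j] eqX n1 j nN by auto
    have "D (n+1) * (W (n+2) \<bullet> col Y j) = D (n+1) * (col X (n+1) \<bullet> col Y j)"
    proof -
      consider "j = n + 1" | "n + 1 < j" | "j = n" | "j + 1 = n" | "j + 2 = n" | "j + 2 < n" by linarith
      then show ?thesis
      proof cases
        case 1
        have "W n \<bullet> (Z *\<^sub>v col Y j) = D (n+1)" using eqY 1 by (simp add: D_eq)
        then show ?thesis using w 1 unfolding z d1 d2 d3 xx by simp
      next
        case 2 then show ?thesis using w Hzero[of "n-1" j] j nN n1 unfolding z d1 d2 d3 xx hh by simp
      next
        case 3
        have "W n \<bullet> (Z *\<^sub>v col Y j) = C n" using eqY 3 by (simp add: C_eq)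
        then show ?thesis using w 3 unfolding z d1 d2 d3 xx by simp
      next
        case 4
        have "W n \<bullet> (Z *\<^sub>v col Y j) = B (n-1)" using eqY 4 by (auto simp: B_eq)
        then show ?thesis using w 4 unfolding z d1 d2 d3 xx by simp
      next
        case 5
        have "n - 1 = j + 1" using 5 by simp
        then have "H $$ (n-1, j) = 1" using Hsub[of "n-1" j] j nN by simp
        then show ?thesis using w 5 unfolding z d1 d2 d3 xx hh by simp
      next
        case 6 then show ?thesis using w Hzero[of "n-1" j] j nN n1 unfolding z d1 d2 d3 xx hh by simp
      qed
    qed
    then have "W (n+2) \<bullet> col Y j = col X (n+1) \<bullet> col Y j" using dn by simp
    then show "col Y j \<bullet> (col X (n+1) - W (n+2)) = 0" unfolding e1 c1 c2 by simp
  qed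
  then show ?thesis
    using minus_zero_eq[where n=N, of "col X (n+1)" "W (n+2)"] by simp
qed

lemma agree: "1 \<le> n \<Longrightarrow> n < N \<Longrightarrow> \<forall>k\<le>n. col X k = W (k+1) \<and> col Y k = V (k+1)"
proof (induction n rule: nat_induct_at_least)
  case base
  have e0: "\<forall>k\<le>0. col X k = W (k+1) \<and> col Y k = V (k+1)" using X0 Y0 by (simp add: W1 V1)
  have "col Y 1 = V 2" using ystep[of 0] e0 base N3 by (simp add: numeral_2_eq_2)
  moreover have "col X 1 = W 2" using X1 W2 by simp
  ultimately show ?case using e0 by (auto simp: le_Suc_eq numeral_2_eq_2)
next
  case (Suc n)
  have IH: "\<forall>k\<le>n. col X k = W (k+1) \<and> col Y k = V (k+1)" using Suc by simp
  have y: "col Y (n+1) = V (n+2)" using ystep[of n] IH Suc by simp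
  have eqY: "\<forall>k\<le>n+1. col Y k = V (k+1)" using IH y by (auto simp: le_Suc_eq)
  have x: "col X (n+1) = W (n+2)" using xstep[of n] IH eqY Suc by simp
  show ?case using IH x y by (auto simp: le_Suc_eq)
qed

lemma uniq: "X = Wm \<and> Y = Vm \<and> H = Hm"
proof -
  have ag: "\<forall>k<N. col X k = W (k+1) \<and> col Y k = V (k+1)" using agree[of "N-1"] N3 by auto
  have X: "X = Wm"
  proof (rule eq_matI)
    fix i j assume "i < dim_row Wm" "j < dim_col Wm"
    then have ij: "i < N" "j < N" by (auto simp: Wrec_def)
    have "X $$ (i,j) = col X j $ i" using XC ij by simp
    then show "X $$ (i,j) = Wm $$ (i,j)" using ag ij by (simp add: Wrec_def)
  qed (use XC in \<open>auto simp: Wrec_def\<close>)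
  have Y: "Y = Vm"
  proof (rule eq_matI)
    fix i j assume "i < dim_row Vm" "j < dim_col Vm"
    then have ij: "i < N" "j < N" by (auto simp: Vrec_def)
    have "Y $$ (i,j) = col Y j $ i" using YC ij by simp
    then show "Y $$ (i,j) = Vm $$ (i,j)" using ag ij by (simp add: Vrec_def)
  qed (use YC in \<open>auto simp: Vrec_def\<close>)
  have "H = Hm" using XZY WtZV unfolding X Y by simp
  then show ?thesis using X Y by simp
qed

end

end

end

end

lemma diag_mult:
  assumes a: "a \<in> carrier_vec N"
  shows "diagZ N z *\<^sub>v a = vec N (\<lambda>i. z i * a $ i)"
proof (rule eq_vecI)
  fix i assume "i < dim_vec (vec N (\<lambda>i. z i * a $ i))"
  then have i: "i < N" by simp
  have "(diagZ N z *\<^sub>v a) $ i = (\<Sum>j\<in>{0..<N}. (if i = j then z i else 0) * a $ j)"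
    using i a by (simp add: diagZ_def scalar_prod_def row_def)
  also have "\<dots> = (\<Sum>j\<in>{0..<N}. (if i = j then z i * a $ j else 0))"
    by (rule sum.cong) auto
  also have "\<dots> = z i * a $ i" using i by simp
  finally show "(diagZ N z *\<^sub>v a) $ i = vec N (\<lambda>i. z i * a $ i) $ i" using i by simp
qed (simp add: diagZ_def)

lemma diag_sym:
  assumes a: "a \<in> carrier_vec N" and b: "b \<in> carrier_vec N"
  shows "(diagZ N z *\<^sub>v a) \<bullet> b = a \<bullet> (diagZ N z *\<^sub>v b)"
  unfolding diag_mult[OF a] diag_mult[OF b] using a b
  by (auto simp: scalar_prod_def intro!: sum.cong)

theorem proposition4p2:
  fixes N :: nat and z :: "nat \<Rightarrow> real" and w1 w2 v1 :: "real vec"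
  assumes "3 \<le> N"
    and "inj_on z {..<N}"
    and "w1 \<in> carrier_vec N" and "w2 \<in> carrier_vec N" and "v1 \<in> carrier_vec N"
    and "w1 \<bullet> v1 = 1" and "w2 \<bullet> v1 = 0" and "w2 \<bullet> (diagZ N z *\<^sub>v v1) = 1"
    and "\<forall>n\<in>{2..N-1}. ld (diagZ N z) w1 w2 v1 n \<noteq> 0"
  shows "(\<exists>!S. iep_sol N (diagZ N z) w1 w2 v1 S) \<and>
         iep_sol N (diagZ N z) w1 w2 v1
           (Wrec N (diagZ N z) w1 w2 v1, Vrec N (diagZ N z) w1 w2 v1, Hrec N (diagZ N z) w1 w2 v1)"
proof -
  have ZC: "diagZ N z \<in> carrier_mat N N" by (simp add: diagZ_def)
  have ZS: "\<And>a b. a \<in> carrier_vec N \<Longrightarrow> b \<in> carrier_vec N \<Longrightarrow>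
      (diagZ N z *\<^sub>v a) \<bullet> b = a \<bullet> (diagZ N z *\<^sub>v b)"
    by (rule diag_sym)
  have sol: "iep_sol N (diagZ N z) w1 w2 v1
           (Wrec N (diagZ N z) w1 w2 v1, Vrec N (diagZ N z) w1 w2 v1, Hrec N (diagZ N z) w1 w2 v1)"
    by (rule rec_sol[OF ZC assms(3-5) ZS assms(6-8) assms(9) assms(1)])
  have un: "S = (Wrec N (diagZ N z) w1 w2 v1, Vrec N (diagZ N z) w1 w2 v1, Hrec N (diagZ N z) w1 w2 v1)"
    if "iep_sol N (diagZ N z) w1 w2 v1 S" for S
  proof -
    obtain X Y H where S: "S = (X, Y, H)" by (cases S) auto
    have h: "X \<in> carrier_mat N N" "Y \<in> carrier_mat N N" "banded_hess N H"
      "col X 0 = w1" "col X 1 = w2" "col Y 0 = v1" "transpose_mat X * Y = 1\<^sub>m N"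
      "transpose_mat X * diagZ N z * Y = H"
      using that unfolding S iep_sol_def by auto
    have "X = Wrec N (diagZ N z) w1 w2 v1 \<and> Y = Vrec N (diagZ N z) w1 w2 v1 \<and> H = Hrec N (diagZ N z) w1 w2 v1"
      by (rule uniq[OF ZC assms(3-5) ZS assms(6-8) assms(9) assms(1) h(1) h(2) h(7) h(8) h(3) h(4) h(5) h(6)])
    then show ?thesis using S by simp
  qed
  show ?thesis using sol un by blast
qed

end
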